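(* Let $d\ge3$ and let $(X_{t,1},\dots,X_{t,d})$, $t=1,\dots,T$, be i.i.d. binary random vectors, each following a determinantal point process with correlation kernel $K_0$, where $K_0$ is real symmetric with all eigenvalues in $(0,1)$ and all entries nonzero. For a reference index $r\in\{1,\dots,d\}$, define the symmetric matrix estimator $\widehat{K}^{(r)}_T$ by: $\widehat{K}^{(r)}_{ii}=\frac1T\sum_t X_{t,i}$; for $i\ne j$, $\widehat{|K_{ij}|}=\sqrt{\widehat{K}^{(r)}_{ii}\widehat{K}^{(r)}_{jj}-\frac1T\sum_t X_{t,i}X_{t,j}}$; $\widehat{K}^{(r)}_{rj}=\widehat{K}^{(r)}_{jr}=\widehat{|K_{rj}|}$ for $j\neq r$; and for distinct $i,j\ne r$, $\widehat{K}^{(r)}_{ij}=\widehat{\mathrm{sgn}}^{(r)}_{ij}\,\widehat{|K_{ij}|}$ with $$\widehat{\mathrm{sgn}}^{(r)}_{ij}=\mathrm{sgn}\Big(\tfrac1T\textstyle\sum_t X_{t,r}X_{t,i}X_{t,j}-\widehat{K}^{(r)}_{rr}\widehat{K}^{(r)}_{ii}\widehat{K}^{(r)}_{jj}+\widehat{K}^{(r)}_{rr}\widehat{|K_{ij}|}^2+\widehat{K}^{(r)}_{ii}\widehat{|K_{rj}|}^2+\widehat{K}^{(r)}_{jj}\widehat{|K_{ri}|}^2\Big).$$ Then for any $r,r'\in\{1,\dots,d\}$, almost surely, for all $T$ large enough there exists a diagonal matrix $D$ with diagonal entries in $\{-1,1\}$ such that $\widehat{K}^{(r)}_T=D\,\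widehat{K}^{(r')}_T\,D$.
   Context: A binary random vector $(X_1,\dots,X_d)$ follows a determinantal point process with correlation kernel $K$ if $\mathbb{P}[X_j=1\ \forall j\in s]=\det K_s$ for all $s\subseteq\{1,\dots,d\}$, with $K_s$ the principal submatrix indexed by $s$. $\mathrm{sgn}(x)$ is $1,-1,0$ according as $x>0,x<0,x=0$. The estimator $\widehat{K}^{(r)}_T$ is the estimator obtained when variable $r$ is indexed as the first variable (its row is estimated as positive); on the event where its defining expressions are undefined it takes an arbitrary conventional value. *)

theory Defs
  imports "HOL-Probability.Probability" "Jordan_Normal_Form.Char_Poly" "Jordan_Normal_Form.DL_Submatrix"
begin

text \<open>Observations: x t i is the value of variable i (0-based, i < d) in sample t
 (0-based; the first T samples are t = 0, ..., T-1).\<close>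

definition mean_hat :: "(nat \<Rightarrow> nat \<Rightarrow> real) \<Rightarrow> nat \<Rightarrow> nat \<Rightarrow> real" where
  "mean_hat x T i = (1 / real T) * (\<Sum>t<T. x t i)"

definition abs_hat :: "(nat \<Rightarrow> nat \<Rightarrow> real) \<Rightarrow> nat \<Rightarrow> nat \<Rightarrow> nat \<Rightarrow> real" where
  "abs_hat x T i j = sqrt (mean_hat x T i * mean_hat x T j - (1 / real T) * (\<Sum>t<T. x t i * x t j))"

definition sgn_hat :: "(nat \<Rightarrow> nat \<Rightarrow> real) \<Rightarrow> nat \<Rightarrow> nat \<Rightarrow> nat \<Rightarrow> nat \<Rightarrow> real" where
  "sgn_hat x T r i j = sgn ((1 / real T) * (\<Sum>t<T. x t r * x t i * x t j)
      - mean_hat x T r * mean_hat x T i * mean_hat x T j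
      + mean_hat x T r * (abs_hat x T i j)^2
      + mean_hat x T i * (abs_hat x T r j)^2
      + mean_hat x T j * (abs_hat x T r i)^2)"

definition K_hat :: "nat \<Rightarrow> (nat \<Rightarrow> nat \<Rightarrow> real) \<Rightarrow> nat \<Rightarrow> nat \<Rightarrow> real mat" where
  "K_hat d x T r = mat d d (\<lambda>(i, j).
      if i = j then mean_hat x T i
      else if i = r \<or> j = r then abs_hat x T i j
      else sgn_hat x T r i j * abs_hat x T i j)"

end

theory Submission
  imports Defs
begin

lemma det1: "det (mat (Suc 0) (Suc 0) f) = (f(0,0)::real)"
  by (simp add: laplace_expansion_row[of _ 1 0] cofactor_def mat_delete_def det_def')
lemma det2: "det (mat 2 2 f) = f(0,0)*f(1,1) - f(0,1)*(f(1,0)::real)"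
  by (simp add: laplace_expansion_row[of _ 2 0] cofactor_def mat_delete_def numeral_2_eq_2 lessThan_Suc det1)
lemma det2': "det (mat (Suc (Suc 0)) (Suc (Suc 0)) f) = f(0,0)*f(1,1) - f(0,1)*(f(1,0)::real)"
  using det2 by (simp add: numeral_2_eq_2)
lemma det3: "det (mat 3 3 f) = (f(0,0)::real)*f(1,1)*f(2,2) + f(0,1)*f(1,2)*f(2,0) + f(0,2)*f(1,0)*f(2,1) - f(0,0)*f(1,2)*f(2,1) - f(0,1)*f(1,0)*f(2,2) - f(0,2)*f(1,1)*f(2,0)"
  by (simp add: laplace_expansion_row[of _ 3 0] cofactor_def mat_delete_def numeral_3_eq_3 numeral_2_eq_2 lessThan_Suc det2' algebra_simps)

lemma sub1:
  assumes "K \<in> carrier_mat d d" "a < d"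
  shows "det (submatrix K {a} {a}) = (K $$ (a,a) :: real)"
proof -
  have c: "{i. i < dim_row K \<and> i \<in> {a}} = {a}" "{i. i < dim_col K \<and> i \<in> {a}} = {a}"
    using assms by auto
  have "pick {a} (card {x\<in>{a}. x < a}) = a" by (rule pick_card_in_set) simp
  moreover have "{x\<in>{a}. x < a} = {}" by auto
  ultimately have p0: "pick {a} 0 = a" by (metis card.empty)
  have "submatrix K {a} {a} = mat (Suc 0) (Suc 0) (\<lambda>(i,j). K $$ (pick {a} i, pick {a} j))"
    unfolding submatrix_def c by simp
  then show ?thesis by (simp del: pick.simps add: det1 p0)
qed

lemma sub2:
  assumes "K \<in> carrier_mat d d" "a < b" "b < d"
  shows "det (submatrix K {a,b} {a,b}) = (K $$ (a,a) * K $$ (b,b) - K $$ (a,b) * K $$ (b,a) :: real)"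
proof -
  have c: "{i. i < dim_row K \<and> i \<in> {a,b}} = {a,b}" "{i. i < dim_col K \<and> i \<in> {a,b}} = {a,b}"
    using assms by auto
  have e0: "{x \<in> {a,b}. x < a} = {}" using assms by auto
  have e1: "{x \<in> {a,b}. x < b} = {a}" using assms by auto
  have c0: "card {x\<in>{a,b}. x < a} = 0" unfolding e0 using assms by simp
  have p0: "pick {a,b} 0 = a" using pick_card_in_set[of a "{a,b}"] c0 by (metis insertCI)
  have c1: "card {x\<in>{a,b}. x < b} = 1" unfolding e1 using assms by simp
  have p1: "pick {a,b} 1 = b" using pick_card_in_set[of b "{a,b}"] c1 by (metis insertCI)
  have p1': "pick {a,b} (Suc 0) = b" by (metis One_nat_def p1)
  have "card {a,b} = 2" using assms by auto
  then have "submatrix K {a,b} {a,b} = mat 2 2 (\<lambda>(i,j). K $$ (pick {a,b} i, pick {a,b} j))"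
    unfolding submatrix_def c by simp
  then show ?thesis by (simp del: pick.simps add: det2 p0 p1 p1')
qed

lemma sub3:
  assumes "K \<in> carrier_mat d d" "a < b" "b < c" "c < d"
  shows "det (submatrix K {a,b,c} {a,b,c}) = (K$$(a,a)*K$$(b,b)*K$$(c,c) + K$$(a,b)*K$$(b,c)*K$$(c,a) + K$$(a,c)*K$$(b,a)*K$$(c,b) - K$$(a,a)*K$$(b,c)*K$$(c,b) - K$$(a,b)*K$$(b,a)*K$$(c,c) - K$$(a,c)*K$$(b,b)*K$$(c,a) :: real)"
proof -
  have c: "{i. i < dim_row K \<and> i \<in> {a,b,c}} = {a,b,c}" "{i. i < dim_col K \<and> i \<in> {a,b,c}} = {a,b,c}"
    using assms by auto
  have e0: "{x \<in> {a,b,c}. x < a} = {}" using assms by auto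
  have e1: "{x \<in> {a,b,c}. x < b} = {a}" using assms by auto
  have e2: "{x \<in> {a,b,c}. x < c} = {a,b}" using assms by auto
  have c0: "card {x\<in>{a,b,c}. x < a} = 0" unfolding e0 using assms by simp
  have p0: "pick {a,b,c} 0 = a" using pick_card_in_set[of a "{a,b,c}"] c0 by (metis insertCI)
  have c1: "card {x\<in>{a,b,c}. x < b} = 1" unfolding e1 using assms by simp
  have p1: "pick {a,b,c} 1 = b" using pick_card_in_set[of b "{a,b,c}"] c1 by (metis insertCI)
  have p1': "pick {a,b,c} (Suc 0) = b" by (metis One_nat_def p1)
  have c2: "card {x\<in>{a,b,c}. x < c} = 2" unfolding e2 using assms by simp
  have p2: "pick {a,b,c} 2 = c" using pick_card_in_set[of c "{a,b,c}"] c2 by (metis insertCI)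
  have p2': "pick {a,b,c} (Suc (Suc 0)) = c" by (metis numeral_2_eq_2 p2)
  have "card {a,b,c} = 3" using assms by auto
  then have "submatrix K {a,b,c} {a,b,c} = mat 3 3 (\<lambda>(i,j). K $$ (pick {a,b,c} i, pick {a,b,c} j))"
    unfolding submatrix_def c by simp
  then show ?thesis by (simp del: pick.simps add: det3 p0 p1 p2 p1' p2')
qed

definition F3 :: "real mat \<Rightarrow> nat \<Rightarrow> nat \<Rightarrow> nat \<Rightarrow> real" where
  "F3 K a b c = K$$(a,a)*K$$(b,b)*K$$(c,c) + 2*K$$(a,b)*K$$(b,c)*K$$(a,c)
     - K$$(a,a)*K$$(b,c)^2 - K$$(b,b)*K$$(a,c)^2 - K$$(c,c)*K$$(a,b)^2"

lemma sub3_ord: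
  assumes "K \<in> carrier_mat d d" "a < b" "b < c" "c < d"
    and sym: "\<And>i j. i<d \<Longrightarrow> j<d \<Longrightarrow> K$$(j,i) = K$$(i,j)"
  shows "det (submatrix K {a,b,c} {a,b,c}) = F3 K a b c"
proof -
  have s1: "K$$(b,a) = K$$(a,b)" "K$$(c,b) = K$$(b,c)" "K$$(c,a) = K$$(a,c)"
    using sym assms by auto
  show ?thesis unfolding sub3[OF assms(1-4)] F3_def s1
    by (simp add: power2_eq_square algebra_simps)
qed

lemma sub3_sym:
  assumes "K \<in> carrier_mat d d" "a < d" "b < d" "c < d" "a \<noteq> b" "b \<noteq> c" "a \<noteq> c"
    and sym: "\<And>i j. i<d \<Longrightarrow> j<d \<Longrightarrow> K$$(j,i) = K$$(i,j)"
  shows "det (submatrix K {a,b,c} {a,b,c}) = F3 K a b c"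
proof -
  have s: "F3 K a b c = F3 K b a c" "F3 K a b c = F3 K a c b" "F3 K a b c = F3 K c b a"
    "F3 K a b c = F3 K b c a" "F3 K a b c = F3 K c a b"
    using sym[of a b] sym[of a c] sym[of b c] assms unfolding F3_def by (simp_all add: algebra_simps)
  have "a < b \<and> b < c \<or> a < c \<and> c < b \<or> b < a \<and> a < c \<or> b < c \<and> c < a \<or> c < a \<and> a < b \<or> c < b \<and> b < a"
    using assms by linarith
  then show ?thesis
  proof (elim disjE conjE)
    assume "a < b" "b < c" then show ?thesis using sub3_ord[OF assms(1) _ _ _ sym] assms by simp
  next
    assume "a < c" "c < b" then show ?thesis using sub3_ord[OF assms(1) _ _ _ sym, of a c b] assms s
      by (simp add: insert_commute)
  next
    assume "b < a" "a < c" then show ?thesis using sub3_ord[OF assms(1) _ _ _ sym, of b a c] assms s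
      by (simp add: insert_commute)
  next
    assume "b < c" "c < a" then show ?thesis using sub3_ord[OF assms(1) _ _ _ sym, of b c a] assms s
      by (simp add: insert_commute)
  next
    assume "c < a" "a < b" then show ?thesis using sub3_ord[OF assms(1) _ _ _ sym, of c a b] assms s
      by (simp add: insert_commute)
  next
    assume "c < b" "b < a" then show ?thesis using sub3_ord[OF assms(1) _ _ _ sym, of c b a] assms s
      by (simp add: insert_commute)
  qed
qed

lemma sub2_sym:
  assumes "K \<in> carrier_mat d d" "a < d" "b < d" "a \<noteq> b"
    and sym: "\<And>i j. i<d \<Longrightarrow> j<d \<Longrightarrow> K$$(j,i) = K$$(i,j)"
  shows "det (submatrix K {a,b} {a,b}) = K$$(a,a) * K$$(b,b) - (K$$(a,b)::real)^2"
proof (cases "a < b")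
  case True then show ?thesis using sub2[OF assms(1) \<open>a<b\<close> assms(3)] sym[of a b] assms
    by (simp add: power2_eq_square)
next
  case False then have "b < a" using assms by simp
  then show ?thesis using sub2[OF assms(1) \<open>b<a\<close> assms(2)] sym[of a b] assms
    by (simp add: power2_eq_square insert_commute)
qed


lemma slln_bounded:
  assumes P: "prob_space M"
    and indep: "prob_space.indep_vars M (\<lambda>_. borel) Y UNIV"
    and bnd: "\<And>t \<omega>. \<omega> \<in> space M \<Longrightarrow> Y t \<omega> \<in> {0..1::real}"
    and ex: "\<And>t. prob_space.expectation M (Y t) = \<mu>"
  shows "AE \<omega> in M. ((\<lambda>T. (1 / real T) * (\<Sum>t<T. Y t \<omega>)) \<longlongrightarrow> \<mu>) sequentially"
proof -
  interpret prob_space M by fact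
  have Ymeas[measurable]: "Y t \<in> borel_measurable M" for t
    using indep unfolding indep_vars_def by auto
  have key: "AE \<omega> in M. eventually (\<lambda>T. \<bar>(1 / real T) * (\<Sum>t<T. Y t \<omega>) - \<mu>\<bar> < e) sequentially"
    if e: "e > 0" for e
  proof -
    define A where "A n = {\<omega>\<in>space M. real n * e \<le> \<bar>(\<Sum>t<n. Y t \<omega>) - real n * \<mu>\<bar>}" for n
    have Ameas: "A n \<in> sets M" for n unfolding A_def by measurable
    have bound: "measure M (A n) \<le> 2 * exp (-2 * e^2) ^ n" for n
    proof (cases "n = 0")
      case True
      have "measure M (A n) \<le> 1" by simp
      moreover have "(1::real) \<le> 2 * exp (-2 * e^2) ^ n" using True by simp
      ultimately show ?thesis by linarith
    next
      case False
      interpret H: Hoeffding_ineq M "{..<n}" Y "\<lambda>_. 0" "\<lambda>_. 1" "\<Sum>t<n. expectation (Y t)"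
      proof unfold_locales
        show "finite {..<n}" by simp
        show "indep_vars (\<lambda>_. borel) Y {..<n}" by (rule indep_vars_subset[OF indep]) simp
        fix i assume "i \<in> {..<n}"
        show "AE x in M. Y i x \<in> {0..1}" using bnd by simp
      qed simp
      have mu: "(\<Sum>t<n. expectation (Y t)) = real n * \<mu>" using ex by simp
      have "measure M (A n) \<le> 2 * exp (-2 * (real n * e)\<^sup>2 / (\<Sum>i<n. (1 - 0)\<^sup>2))"
        using H.Hoeffding_ineq_abs_ge[of "real n * e"] e False unfolding A_def mu
        by simp
      also have "-2 * (real n * e)\<^sup>2 / (\<Sum>i<n. (1 - 0)\<^sup>2) = real n * (-2 * e^2)"
        using False by (simp add: power2_eq_square)
      also have "exp (real n * (-2 * e^2)) = exp (-2 * e^2) ^ n" by (rule exp_of_nat_mult)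
      finally show ?thesis .
    qed
    have sum: "summable (\<lambda>n. measure M (A n))"
    proof (rule summable_comparison_test')
      show "summable (\<lambda>n. 2 * exp (-2 * e^2) ^ n)"
        using e by (intro summable_mult summable_geometric) simp
      show "norm (measure M (A n)) \<le> 2 * exp (-2 * e^2) ^ n" for n using bound[of n] by simp
    qed
    have "AE \<omega> in M. eventually (\<lambda>n. \<omega> \<in> space M - A n) sequentially"
      by (rule borel_cantelli_AE1[OF Ameas _ sum]) (simp add: less_top[symmetric])
    then show ?thesis
    proof (rule eventually_mono)
      fix \<omega> assume "eventually (\<lambda>n. \<omega> \<in> space M - A n) sequentially"
      moreover have "eventually (\<lambda>n. n > 0) sequentially" by (rule eventually_gt_at_top)
      ultimately show "eventually (\<lambda>T. \<bar>(1 / real T) * (\<Sum>t<T. Y t \<omega>) - \<mu>\<bar> < e) sequentially"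
      proof eventually_elim
        case (elim n)
        then have "\<bar>(\<Sum>t<n. Y t \<omega>) - real n * \<mu>\<bar> < real n * e" unfolding A_def by auto
        moreover have "(1 / real n) * (\<Sum>t<n. Y t \<omega>) - \<mu> = ((\<Sum>t<n. Y t \<omega>) - real n * \<mu>) / real n"
          using elim by (simp add: field_simps)
        ultimately show ?case using elim by (simp add: abs_div pos_divide_less_eq mult.commute)
      qed
    qed
  qed
  have "AE \<omega> in M. \<forall>k::nat. eventually (\<lambda>T. \<bar>(1 / real T) * (\<Sum>t<T. Y t \<omega>) - \<mu>\<bar> < 1 / real (Suc k)) sequentially"
    unfolding AE_all_countable by (intro allI key) simp
  then show ?thesis
  proof (rule eventually_mono)
    fix \<omega> assume H: "\<forall>k::nat. eventually (\<lambda>T. \<bar>(1 / real T) * (\<Sum>t<T. Y t \<omega>) - \<mu>\<bar> < 1 / real (Suc k)) sequentially"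
    show "((\<lambda>T. (1 / real T) * (\<Sum>t<T. Y t \<omega>)) \<longlongrightarrow> \<mu>) sequentially"
    proof (rule tendstoI)
      fix e :: real assume "e > 0"
      then obtain k where k: "1 / real (Suc k) < e" by (rule nat_approx_posE)
      show "eventually (\<lambda>T. dist ((1 / real T) * (\<Sum>t<T. Y t \<omega>)) \<mu> < e) sequentially"
        using H[rule_format, of k] by eventually_elim (use k in \<open>simp add: dist_real_def\<close>)
    qed
  qed
qed


definition dmat :: "nat \<Rightarrow> (nat \<Rightarrow> real) \<Rightarrow> real mat" where
  "dmat n e = mat n n (\<lambda>(i,j). if i = j then e i else 0)"

lemma dmat_left:
  assumes "A \<in> carrier_mat n m" "i < n" "k < m"
  shows "(dmat n e * A) $$ (i,k) = e i * A $$ (i,k)"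
proof -
  have "(dmat n e * A) $$ (i,k) = (\<Sum>l\<in>{0..<n}. (if i = l then e i else 0) * A $$ (l,k))"
    using assms by (simp add: dmat_def scalar_prod_def)
  also have "\<dots> = (\<Sum>l\<in>{0..<n}. if l = i then e i * A $$ (i,k) else 0)"
    by (rule sum.cong) auto
  also have "\<dots> = e i * A $$ (i,k)" using assms by simp
  finally show ?thesis .
qed

lemma dmat_right:
  assumes "A \<in> carrier_mat m n" "i < m" "k < n"
  shows "(A * dmat n e) $$ (i,k) = A $$ (i,k) * e k"
proof -
  have "(A * dmat n e) $$ (i,k) = (\<Sum>l\<in>{0..<n}. A $$ (i,l) * (if l = k then e l else 0))"
    using assms by (simp add: dmat_def scalar_prod_def)
  also have "\<dots> = (\<Sum>l\<in>{0..<n}. if l = k then A $$ (i,k) * e k else 0)"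
    by (rule sum.cong) auto
  also have "\<dots> = A $$ (i,k) * e k" using assms by simp
  finally show ?thesis .
qed

lemma dmat_conj:
  assumes "A \<in> carrier_mat n n" "i < n" "j < n"
  shows "(dmat n e * A * dmat n e) $$ (i,j) = e i * A $$ (i,j) * e j"
proof -
  have "dmat n e * A \<in> carrier_mat n n" by (rule mult_carrier_mat[OF _ assms(1)]) (simp add: dmat_def)
  then show ?thesis using assms dmat_right dmat_left by simp
qed

lemma sgn_sq: "(x::real) \<noteq> 0 \<Longrightarrow> sgn x * sgn x = 1"
  by (cases "x > 0") auto

lemma Khat_entry:
  fixes K0 :: "real mat"
  assumes sym: "\<And>i j. i<d \<Longrightarrow> j<d \<Longrightarrow> K0$$(j,i) = K0$$(i,j)"
    and nz: "\<And>i j. i<d \<Longrightarrow> j<d \<Longrightarrow> K0$$(i,j) \<noteq> 0"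
    and pos: "K0$$(r,r) > 0" and r: "r < d"
    and sg: "\<And>i j. i<d \<Longrightarrow> j<d \<Longrightarrow> i\<noteq>j \<Longrightarrow> i\<noteq>r \<Longrightarrow> j\<noteq>r \<Longrightarrow>
               sgn_hat x T r i j = sgn (K0$$(r,i) * K0$$(r,j) * K0$$(i,j))"
    and ij: "i < d" "j < d" "i \<noteq> j"
  shows "K_hat d x T r $$ (i,j) = sgn (K0$$(r,i)) * sgn (K0$$(r,j)) * sgn (K0$$(i,j)) * abs_hat x T i j"
proof -
  have "K_hat d x T r $$ (i,j) = (if i = r \<or> j = r then abs_hat x T i j else sgn_hat x T r i j * abs_hat x T i j)"
    using ij by (simp add: K_hat_def)
  also have "\<dots> = sgn (K0$$(r,i)) * sgn (K0$$(r,j)) * sgn (K0$$(i,j)) * abs_hat x T i j"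
  proof (cases "i = r")
    case True
    then show ?thesis using pos sgn_sq[OF nz[OF r ij(2)]] by simp
  next
    case False
    show ?thesis
    proof (cases "j = r")
      case True
      then show ?thesis using pos sgn_sq[OF nz[OF r ij(1)]] sym[OF ij(1) r] False by (simp add: mult.commute)
    next
      case False': False
      then show ?thesis using False sg[OF ij] by (simp add: sgn_mult)
    qed
  qed
  finally show ?thesis .
qed

lemma final_step:
  fixes K0 :: "real mat"
  assumes sym: "\<And>i j. i<d \<Longrightarrow> j<d \<Longrightarrow> K0$$(j,i) = K0$$(i,j)"
    and nz: "\<And>i j. i<d \<Longrightarrow> j<d \<Longrightarrow> K0$$(i,j) \<noteq> 0"
    and pos: "\<And>i. i < d \<Longrightarrow> K0$$(i,i) > 0" and r: "r < d" "r' < d"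
    and sg: "\<And>r0 i j. r0 \<in> {r,r'} \<Longrightarrow> i<d \<Longrightarrow> j<d \<Longrightarrow> i\<noteq>j \<Longrightarrow> i\<noteq>r0 \<Longrightarrow> j\<noteq>r0 \<Longrightarrow>
               sgn_hat x T r0 i j = sgn (K0$$(r0,i) * K0$$(r0,j) * K0$$(i,j))"
  shows "\<exists>D. D \<in> carrier_mat d d \<and> diagonal_mat D \<and> (\<forall>i<d. D $$ (i, i) \<in> {-1, 1}) \<and>
            K_hat d x T r = D * K_hat d x T r' * D"
proof (intro exI conjI)
  define e where "e i = sgn (K0$$(r,i)) * sgn (K0$$(r',i))" for i
  show "dmat d e \<in> carrier_mat d d" by (simp add: dmat_def)
  show "diagonal_mat (dmat d e)" by (simp add: dmat_def diagonal_mat_def)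
  have e1: "e i \<in> {-1,1}" if "i < d" for i
    using nz[OF r(1) that] nz[OF r(2) that] unfolding e_def
    by (cases "K0$$(r,i) > 0"; cases "K0$$(r',i) > 0") (auto simp: sgn_if)
  show "\<forall>i<d. dmat d e $$ (i, i) \<in> {-1, 1}" using e1 by (simp add: dmat_def)
  have C: "K_hat d x T r' \<in> carrier_mat d d" by (simp add: K_hat_def)
  show "K_hat d x T r = dmat d e * K_hat d x T r' * dmat d e"
  proof (rule eq_matI)
    show "dim_row (K_hat d x T r) = dim_row (dmat d e * K_hat d x T r' * dmat d e)"
      by (simp add: K_hat_def dmat_def)
    show "dim_col (K_hat d x T r) = dim_col (dmat d e * K_hat d x T r' * dmat d e)"
      by (simp add: K_hat_def dmat_def)
    fix i j assume "i < dim_row (dmat d e * K_hat d x T r' * dmat d e)"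
      "j < dim_col (dmat d e * K_hat d x T r' * dmat d e)"
    then have ij: "i < d" "j < d" by (simp_all add: dmat_def)
    have ee: "e i * e i = 1" using e1[OF ij(1)] by auto
    show "K_hat d x T r $$ (i, j) = (dmat d e * K_hat d x T r' * dmat d e) $$ (i, j)"
      unfolding dmat_conj[OF C ij]
    proof (cases "i = j")
      case True
      then show "K_hat d x T r $$ (i, j) = e i * K_hat d x T r' $$ (i, j) * e j"
        using ij ee by (simp add: K_hat_def mult.commute)
    next
      case False
      have A: "K_hat d x T r $$ (i,j) = sgn (K0$$(r,i)) * sgn (K0$$(r,j)) * sgn (K0$$(i,j)) * abs_hat x T i j"
        by (rule Khat_entry[OF sym nz pos[OF r(1)] r(1) _ ij False]) (use sg in auto)
      have B: "K_hat d x T r' $$ (i,j) = sgn (K0$$(r',i)) * sgn (K0$$(r',j)) * sgn (K0$$(i,j)) * abs_hat x T i j"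
        by (rule Khat_entry[OF sym nz pos[OF r(2)] r(2) _ ij False]) (use sg in auto)
      have s1: "sgn (K0$$(r',i)) * sgn (K0$$(r',i)) = 1" "sgn (K0$$(r',j)) * sgn (K0$$(r',j)) = 1"
        using sgn_sq nz r ij by auto
      have "e i * K_hat d x T r' $$ (i, j) * e j =
         (sgn (K0$$(r,i)) * sgn (K0$$(r,j)) * sgn (K0$$(i,j)) * abs_hat x T i j) *
         (sgn (K0$$(r',i)) * sgn (K0$$(r',i))) * (sgn (K0$$(r',j)) * sgn (K0$$(r',j)))"
        unfolding B e_def by (simp only: mult_ac)
      then show "K_hat d x T r $$ (i, j) = e i * K_hat d x T r' $$ (i, j) * e j"
        unfolding A s1 by simp
    qed
  qed
qed

lemma sgn_eventually:
  assumes "(f \<longlongrightarrow> L) F" "L \<noteq> (0::real)"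
  shows "eventually (\<lambda>T. sgn (f T) = sgn L) F"
proof (cases "L > 0")
  case True
  have "eventually (\<lambda>T. f T > 0) F" using order_tendstoD(1)[OF assms(1) True] .
  then show ?thesis by eventually_elim (use True in simp)
next
  case False
  then have L: "L < 0" using assms(2) by simp
  have "eventually (\<lambda>T. f T < 0) F" using order_tendstoD(2)[OF assms(1) L] .
  then show ?thesis by eventually_elim (use L in simp)
qed

lemma det_part:
  fixes x :: "nat \<Rightarrow> nat \<Rightarrow> real" and K0 :: "real mat"
  assumes K0: "K0 \<in> carrier_mat d d"
    and sym: "\<And>i j. i<d \<Longrightarrow> j<d \<Longrightarrow> K0$$(j,i) = K0$$(i,j)"
    and nz: "\<And>i j. i<d \<Longrightarrow> j<d \<Longrightarrow> K0$$(i,j) \<noteq> 0"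
    and pos: "\<And>i. i<d \<Longrightarrow> K0$$(i,i) > 0"
    and lim: "\<And>s. s \<subseteq> {..<d} \<Longrightarrow>
       ((\<lambda>T. (1 / real T) * (\<Sum>t<T. \<Prod>j\<in>s. x t j)) \<longlongrightarrow> det (submatrix K0 s s)) sequentially"
    and r: "r < d" "r' < d"
  shows "eventually (\<lambda>T. \<exists>D. D \<in> carrier_mat d d \<and> diagonal_mat D \<and>
            (\<forall>i<d. D $$ (i, i) \<in> {-1, 1}) \<and>
            K_hat d x T r = D * K_hat d x T r' * D) sequentially"
proof -
  have m: "((\<lambda>T. mean_hat x T i) \<longlongrightarrow> K0$$(i,i)) sequentially" if "i < d" for i
    using lim[of "{i}"] that sub1[OF K0 that] by (simp add: mean_hat_def)
  have p: "((\<lambda>T. (1 / real T) * (\<Sum>t<T. x t i * x t j)) \<longlongrightarrow> K0$$(i,i) * K0$$(j,j) - K0$$(i,j)^2) sequentially"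
    if "i < d" "j < d" "i \<noteq> j" for i j
    using lim[of "{i,j}"] that sub2_sym[OF K0 that sym] by simp
  have a2: "((\<lambda>T. (abs_hat x T i j)^2) \<longlongrightarrow> K0$$(i,j)^2) sequentially"
    if "i < d" "j < d" "i \<noteq> j" for i j
  proof -
    have "((\<lambda>T. \<bar>mean_hat x T i * mean_hat x T j - (1 / real T) * (\<Sum>t<T. x t i * x t j)\<bar>)
       \<longlongrightarrow> \<bar>K0$$(i,i) * K0$$(j,j) - (K0$$(i,i) * K0$$(j,j) - K0$$(i,j)^2)\<bar>) sequentially"
      by (intro tendsto_rabs tendsto_diff tendsto_mult m p that)
    then show ?thesis by (simp add: abs_hat_def power2_eq_square)
  qed
  have q: "((\<lambda>T. (1 / real T) * (\<Sum>t<T. x t a * x t b * x t c)) \<longlongrightarrow> F3 K0 a b c) sequentially"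
    if "a < d" "b < d" "c < d" "a \<noteq> b" "b \<noteq> c" "a \<noteq> c" for a b c
  proof -
    have "(\<Prod>j\<in>{a,b,c}. x t j) = x t a * x t b * x t c" for t using that by (simp add: mult.assoc)
    then show ?thesis using lim[of "{a,b,c}"] that sub3_sym[OF K0 that sym] by (simp add: mult.assoc)
  qed
  have G: "eventually (\<lambda>T. sgn_hat x T r0 i j = sgn (K0$$(r0,i) * K0$$(r0,j) * K0$$(i,j))) sequentially"
    if "r0 < d" "i < d" "j < d" "i \<noteq> j" "i \<noteq> r0" "j \<noteq> r0" for r0 i j
  proof -
    have "((\<lambda>T. (1 / real T) * (\<Sum>t<T. x t r0 * x t i * x t j)
      - mean_hat x T r0 * mean_hat x T i * mean_hat x T j
      + mean_hat x T r0 * (abs_hat x T i j)^2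
      + mean_hat x T i * (abs_hat x T r0 j)^2
      + mean_hat x T j * (abs_hat x T r0 i)^2) \<longlongrightarrow>
      F3 K0 r0 i j - K0$$(r0,r0) * K0$$(i,i) * K0$$(j,j) + K0$$(r0,r0) * K0$$(i,j)^2
       + K0$$(i,i) * K0$$(r0,j)^2 + K0$$(j,j) * K0$$(r0,i)^2) sequentially"
      using that by (intro tendsto_add tendsto_diff tendsto_mult m q a2) auto
    also have "F3 K0 r0 i j - K0$$(r0,r0) * K0$$(i,i) * K0$$(j,j) + K0$$(r0,r0) * K0$$(i,j)^2
       + K0$$(i,i) * K0$$(r0,j)^2 + K0$$(j,j) * K0$$(r0,i)^2 = 2 * (K0$$(r0,i) * K0$$(r0,j) * K0$$(i,j))"
      unfolding F3_def by (simp add: algebra_simps)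
    finally have "eventually (\<lambda>T. sgn_hat x T r0 i j = sgn (2 * (K0$$(r0,i) * K0$$(r0,j) * K0$$(i,j)))) sequentially"
      unfolding sgn_hat_def by (rule sgn_eventually) (use nz that in auto)
    then show ?thesis by (simp add: sgn_mult)
  qed
  have G': "eventually (\<lambda>T. (i \<noteq> j \<and> i \<noteq> r0 \<and> j \<noteq> r0) \<longrightarrow>
       sgn_hat x T r0 i j = sgn (K0$$(r0,i) * K0$$(r0,j) * K0$$(i,j))) sequentially"
    if "r0 < d" "i < d" "j < d" for r0 i j
  proof (cases "i \<noteq> j \<and> i \<noteq> r0 \<and> j \<noteq> r0")
    case True
    then show ?thesis using G[OF that] True by (auto elim: eventually_mono)
  next
    case False
    then show ?thesis by auto
  qed
  have E: "eventually (\<lambda>T. \<forall>r0\<in>{r,r'}. \<forall>i\<in>{..<d}. \<forall>j\<in>{..<d}. (i \<noteq> j \<and> i \<noteq> r0 \<and> j \<noteq> r0) \<longrightarrow>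
       sgn_hat x T r0 i j = sgn (K0$$(r0,i) * K0$$(r0,j) * K0$$(i,j))) sequentially"
    using r by (intro eventually_ball_finite ballI G') auto
  show ?thesis
    using E
  proof (rule eventually_mono)
    fix T assume H: "\<forall>r0\<in>{r,r'}. \<forall>i\<in>{..<d}. \<forall>j\<in>{..<d}. (i \<noteq> j \<and> i \<noteq> r0 \<and> j \<noteq> r0) \<longrightarrow>
       sgn_hat x T r0 i j = sgn (K0$$(r0,i) * K0$$(r0,j) * K0$$(i,j))"
    show "\<exists>D. D \<in> carrier_mat d d \<and> diagonal_mat D \<and> (\<forall>i<d. D $$ (i, i) \<in> {-1, 1}) \<and>
            K_hat d x T r = D * K_hat d x T r' * D"
      by (rule final_step[OF sym nz pos r]) (use H in auto)
  qed
qed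
theorem proposition6:
  fixes M :: "'a measure" and X :: "nat \<Rightarrow> nat \<Rightarrow> 'a \<Rightarrow> real"
    and K0 :: "real mat" and d r r' :: nat
  assumes "prob_space M"
    and "d \<ge> 3"
    and "K0 \<in> carrier_mat d d"
    and "transpose_mat K0 = K0"
    and "\<And>ev. eigenvalue K0 ev \<Longrightarrow> 0 < ev \<and> ev < 1"
    and "\<And>i j. i < d \<Longrightarrow> j < d \<Longrightarrow> K0 $$ (i, j) \<noteq> 0"
    and binary: "\<And>t i \<omega>. i < d \<Longrightarrow> \<omega> \<in> space M \<Longrightarrow> X t i \<omega> \<in> {0, 1}"
    and indep: "prob_space.indep_vars M (\<lambda>_. PiM {..<d} (\<lambda>_. borel))
                  (\<lambda>t \<omega>. \<lambda>i\<in>{..<d}. X t i \<omega>) UNIV"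
    and dpp: "\<And>t s. s \<subseteq> {..<d} \<Longrightarrow>
                measure M {\<omega> \<in> space M. \<forall>j\<in>s. X t j \<omega> = 1} = det (submatrix K0 s s)"
    and "r < d" and "r' < d"
  shows "AE \<omega> in M. eventually (\<lambda>T. \<exists>D. D \<in> carrier_mat d d \<and> diagonal_mat D \<and>
            (\<forall>i<d. D $$ (i, i) \<in> {-1, 1}) \<and>
            K_hat d (\<lambda>t i. X t i \<omega>) T r = D * K_hat d (\<lambda>t i. X t i \<omega>) T r' * D) sequentially"
proof -
  interpret prob_space M by fact
  have K0: "K0 \<in> carrier_mat d d" by fact
  have sym: "K0$$(j,i) = K0$$(i,j)" if "i < d" "j < d" for i j
  proof -
    have "K0$$(j,i) = transpose_mat K0 $$ (i,j)" using that K0 by simp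
    then show ?thesis using assms(4) by simp
  qed
  have nz: "\<And>i j. i<d \<Longrightarrow> j<d \<Longrightarrow> K0$$(i,j) \<noteq> 0" by fact
  have pos: "K0$$(i,i) > 0" if "i < d" for i
  proof -
    have "0 \<le> measure M {\<omega> \<in> space M. \<forall>j\<in>{i}. X 0 j \<omega> = 1}" by simp
    also have "\<dots> = K0$$(i,i)" using dpp[of "{i}" 0] that sub1[OF K0 that] by simp
    finally show ?thesis using nz[OF that that] by simp
  qed
  have Vmeas: "(\<lambda>\<omega>. \<lambda>i\<in>{..<d}. X t i \<omega>) \<in> measurable M (PiM {..<d} (\<lambda>_. borel))" for t
    using indep unfolding indep_vars_def by auto
  have Xmeas: "X t j \<in> borel_measurable M" if "j < d" for t j
  proof -
    have "(\<lambda>\<omega>. (\<lambda>i\<in>{..<d}. X t i \<omega>) j) \<in> borel_measurable M"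
      using measurable_compose[OF Vmeas measurable_component_singleton[of j "{..<d}" "\<lambda>_. borel"]] that
      by simp
    then show ?thesis using that by simp
  qed
  have lims: "AE \<omega> in M. ((\<lambda>T. (1 / real T) * (\<Sum>t<T. \<Prod>j\<in>s. X t j \<omega>)) \<longlongrightarrow> det (submatrix K0 s s)) sequentially"
    if s: "s \<subseteq> {..<d}" for s
  proof (rule slln_bounded)
    show "prob_space M" by fact
    have "indep_vars (\<lambda>_. borel) (\<lambda>t \<omega>. (\<lambda>v. \<Prod>j\<in>s. v j) ((\<lambda>i\<in>{..<d}. X t i \<omega>))) UNIV"
    proof (rule indep_vars_compose2[OF indep])
      show "(\<lambda>v. \<Prod>j\<in>s. v j) \<in> borel_measurable (PiM {..<d} (\<lambda>_. borel :: real measure))"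
        by (intro borel_measurable_prod measurable_component_singleton) (use s in auto)
    qed
    moreover have "(\<lambda>t \<omega>. (\<lambda>v. \<Prod>j\<in>s. v j) ((\<lambda>i\<in>{..<d}. X t i \<omega>))) = (\<lambda>t \<omega>. \<Prod>j\<in>s. X t j \<omega>)"
      using s by (intro ext prod.cong) auto
    ultimately show "indep_vars (\<lambda>_. borel) (\<lambda>t \<omega>. \<Prod>j\<in>s. X t j \<omega>) UNIV" by simp
    have fin: "finite s" using s finite_subset by blast
    have ind: "(\<Prod>j\<in>s. X t j \<omega>) = indicator {\<omega> \<in> space M. \<forall>j\<in>s. X t j \<omega> = 1} \<omega>"
      if "\<omega> \<in> space M" for t \<omega>
    proof (cases "\<forall>j\<in>s. X t j \<omega> = 1")
      case True
      then show ?thesis using that by (simp add: indicator_def)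
    next
      case False
      then obtain j where j: "j \<in> s" "X t j \<omega> \<noteq> 1" by auto
      then have "X t j \<omega> = 0" using binary[of j \<omega> t] s that by auto
      then have "(\<Prod>j\<in>s. X t j \<omega>) = 0" using j fin by (intro prod_zero) auto
      then show ?thesis using False by (simp add: indicator_def)
    qed
    show "(\<Prod>j\<in>s. X t j \<omega>) \<in> {0..1}" if "\<omega> \<in> space M" for t \<omega>
      using ind[OF that] by (simp add: indicator_def)
    show "expectation (\<lambda>\<omega>. \<Prod>j\<in>s. X t j \<omega>) = det (submatrix K0 s s)" for t
    proof -
      have "expectation (\<lambda>\<omega>. \<Prod>j\<in>s. X t j \<omega>) = expectation (indicator {\<omega> \<in> space M. \<forall>j\<in>s. X t j \<omega> = 1})"
        by (rule Bochner_Integration.integral_cong) (use ind in auto)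
      also have "\<dots> = measure M {\<omega> \<in> space M. \<forall>j\<in>s. X t j \<omega> = 1}"
        by (simp add: Int_absorb2 subset_iff)
      also have "\<dots> = det (submatrix K0 s s)" using dpp[OF s] .
      finally show ?thesis .
    qed
  qed
  have "AE \<omega> in M. \<forall>s\<in>Pow {..<d}. ((\<lambda>T. (1 / real T) * (\<Sum>t<T. \<Prod>j\<in>s. X t j \<omega>)) \<longlongrightarrow> det (submatrix K0 s s)) sequentially"
    by (rule AE_ball_countable') (use lims in \<open>auto intro: countable_finite\<close>)
  then show ?thesis
  proof (rule eventually_mono)
    fix \<omega> assume H: "\<forall>s\<in>Pow {..<d}. ((\<lambda>T. (1 / real T) * (\<Sum>t<T. \<Prod>j\<in>s. X t j \<omega>)) \<longlongrightarrow> det (submatrix K0 s s)) sequentially"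
    show "eventually (\<lambda>T. \<exists>D. D \<in> carrier_mat d d \<and> diagonal_mat D \<and>
            (\<forall>i<d. D $$ (i, i) \<in> {-1, 1}) \<and>
            K_hat d (\<lambda>t i. X t i \<omega>) T r = D * K_hat d (\<lambda>t i. X t i \<omega>) T r' * D) sequentially"
      by (rule det_part[OF K0 sym nz pos _ assms(10,11)]) (use H in auto)
  qed
qed

end
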